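(* Let $\psi(z)=\sum_{n\ge 0} b_n z^n\in\mathcal K$ have radius of convergence $R_\psi>0$. If $\psi\in\mathcal K^\star$ with apex $\tau\in(0,R_\psi)$, then the function $t\mapsto t/\psi(t)$ (1) is strictly increasing on $[0,\tau)$, (2) is strictly decreasing on $(\tau,R_\psi)$, and (3) attains its maximum at $t=\tau$. If $\psi\in\mathcal K\setminus\mathcal K^\star$, then $t\mapsto t/\psi(t)$ is strictly increasing on $(0,R_\psi)$.
   Context: $\mathcal K$ denotes the class of non-constant power series $f(z)=\sum_{n\ge0}a_nz^n$ with positive radius of convergence $R$, non-negative coefficients and $a_0>0$. The Khinchin family of $f\in\mathcal K$ is the family of random variables $(X_t)_{t\in[0,R)}$ with $\mathbf P(X_t=n)=a_nt^n/f(t)$ for $n\ge0$, $t\in(0,R)$, and $X_0\equiv0$; its mean is $m_f(t)=\mathbf E(X_t)=tf'(t)/f(t)$, which is increasing in $t$. $\mathcal K^\star$ is the subclass of $f\in\mathcal K$ with $\lim_{t\uparrow R}m_f(t)>1$; for such $f$ the apex is the unique $\tau\in(0,R)$ with $m_f(\tau)=1$. *)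

theory Defs
  imports "HOL-Analysis.Analysis"
begin

definition pser :: "(nat \<Rightarrow> real) \<Rightarrow> real \<Rightarrow> real" where
  "pser b t = (\<Sum>n. b n * t ^ n)"

definition in_K :: "(nat \<Rightarrow> real) \<Rightarrow> bool" where
  "in_K b \<longleftrightarrow> (\<forall>n. 0 \<le> b n) \<and> 0 < b 0 \<and> (\<exists>n>0. b n \<noteq> 0) \<and> 0 < conv_radius b"

definition kmean :: "(nat \<Rightarrow> real) \<Rightarrow> real \<Rightarrow> real" where
  "kmean b t = t * deriv (pser b) t / pser b t"

definition up_to_radius :: "ereal \<Rightarrow> real filter" where
  "up_to_radius R = (if R = \<infinity> then at_top else at_left (real_of_ereal R))"

definition in_Kstar :: "(nat \<Rightarrow> real) \<Rightarrow> bool" where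
  "in_Kstar b \<longleftrightarrow> in_K b \<and>
     (\<exists>L::ereal. ((\<lambda>t. ereal (kmean b t)) \<longlongrightarrow> L) (up_to_radius (conv_radius b)) \<and> L > 1)"

end

theory Submission
  imports Defs
begin

lemma sum_b: "ereal \<bar>x\<bar> < conv_radius b \<Longrightarrow> summable (\<lambda>n. b n * x ^ n)"
  using summable_in_conv_radius[of x b] by simp

lemma sum_diffs:
  assumes "ereal \<bar>x\<bar> < conv_radius b"
  shows "summable (\<lambda>n. diffs b n * x ^ n)"
proof -
  obtain K where K: "ereal \<bar>x\<bar> < ereal K" "ereal K < conv_radius b" using ereal_dense2[OF assms] by blast
  show ?thesis
  proof (rule termdiff_converges[of x K])
    show "norm x < K" using K by simp
    fix y :: real assume "norm y < K"
    then have "ereal \<bar>y\<bar> < ereal K" by simp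
    then have "ereal \<bar>y\<bar> < conv_radius b" using K(2) by (rule order_less_trans)
    then show "summable (\<lambda>n. b n * y ^ n)" by (rule sum_b)
  qed
qed

lemma pser_deriv:
  assumes "ereal \<bar>x\<bar> < conv_radius b"
  shows "(pser b has_field_derivative (\<Sum>n. diffs b n * x ^ n)) (at x)"
proof -
  have e: "pser b = (\<lambda>z. \<Sum>n. b n * z^n)" by (simp add: pser_def fun_eq_iff)
  obtain K where K: "ereal \<bar>x\<bar> < ereal K" "ereal K < conv_radius b" using ereal_dense2[OF assms] by blast
  show ?thesis unfolding e
  proof (rule termdiffs_strong'[of K])
    show "norm x < K" using K by simp
    fix y :: real assume "norm y < K"
    then have "ereal \<bar>y\<bar> < ereal K" by simp
    then have "ereal \<bar>y\<bar> < conv_radius b" using K(2) by (rule order_less_trans)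
    then show "summable (\<lambda>n. b n * y ^ n)" by (rule sum_b)
  qed
qed

definition NN :: "(nat \<Rightarrow> real) \<Rightarrow> real \<Rightarrow> real" where
  "NN b x = (\<Sum>n. real n * b n * x ^ n)"

lemma NN_eq:
  assumes "ereal \<bar>x\<bar> < conv_radius b"
  shows "summable (\<lambda>n. real n * b n * x ^ n)" "NN b x = x * (\<Sum>n. diffs b n * x ^ n)"
proof -
  have s: "summable (\<lambda>n. x * (diffs b n * x ^ n))"
    using summable_mult[OF sum_diffs[OF assms]] by simp
  have eq: "(\<lambda>n. x * (diffs b n * x ^ n)) = (\<lambda>n. real (Suc n) * b (Suc n) * x ^ (Suc n))"
    by (simp add: diffs_def fun_eq_iff)
  have s2: "summable (\<lambda>n. real (Suc n) * b (Suc n) * x ^ (Suc n))" using s eq by simp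
  show s3: "summable (\<lambda>n. real n * b n * x ^ n)"
    using s2 summable_Suc_iff[of "\<lambda>n. real n * b n * x ^ n"] by simp
  have "NN b x = (\<Sum>n. real (Suc n) * b (Suc n) * x ^ (Suc n))"
    unfolding NN_def using suminf_split_head[OF s3] by simp
  also have "\<dots> = (\<Sum>n. x * (diffs b n * x ^ n))" using eq by simp
  also have "\<dots> = x * (\<Sum>n. diffs b n * x ^ n)"
    using suminf_mult[OF sum_diffs[OF assms]] by simp
  finally show "NN b x = x * (\<Sum>n. diffs b n * x ^ n)" .
qed

lemma pser_pos:
  assumes "in_K b" "0 \<le> x" "ereal x < conv_radius b"
  shows "0 < pser b x"
proof -
  have s: "summable (\<lambda>n. b n * x ^ n)" using sum_b assms by simp
  have "b 0 * x ^ 0 \<le> pser b x" unfolding pser_def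
    using sum_le_suminf[OF s, of "{0}"] assms unfolding in_K_def by simp
  then show ?thesis using assms unfolding in_K_def by simp
qed

lemma kmean_eq:
  assumes "in_K b" "0 \<le> x" "ereal x < conv_radius b"
  shows "kmean b x = NN b x / pser b x"
proof -
  have "deriv (pser b) x = (\<Sum>n. diffs b n * x ^ n)"
    using pser_deriv[of x b] assms by (intro DERIV_imp_deriv) simp
  then show ?thesis unfolding kmean_def using NN_eq(2)[of x b] assms by simp
qed

lemma a_sums:
  assumes "0 < x" "ereal x < conv_radius b"
  shows "(\<lambda>n. (c - real n) * b n * x powr (real n - c)) sums (x powr (-c) * (c * pser b x - NN b x))"
proof -
  have ax: "ereal \<bar>x\<bar> < conv_radius b" using assms by simp
  have e: "(\<lambda>n. (c - real n) * b n * x powr (real n - c)) = (\<lambda>n. x powr (-c) * (c * (b n * x ^ n) - real n * b n * x ^ n))"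
  proof
    fix n
    have "x powr (real n - c) = x ^ n * x powr (-c)"
      using assms(1) by (simp add: powr_diff powr_realpow powr_minus divide_inverse)
    then show "(c - real n) * b n * x powr (real n - c) = x powr (-c) * (c * (b n * x ^ n) - real n * b n * x ^ n)"
      by (simp add: algebra_simps)
  qed
  have s1: "(\<lambda>n. b n * x ^ n) sums pser b x" using sum_b[OF ax] unfolding pser_def by (simp add: summable_sums)
  have s2: "(\<lambda>n. real n * b n * x ^ n) sums NN b x" using NN_eq(1)[OF ax] unfolding NN_def by (simp add: summable_sums)
  show ?thesis unfolding e
    by (intro sums_mult sums_diff s2 sums_mult[OF s1])
qed

lemma key:
  assumes K: "in_K b" and st: "0 < s" "s < t" "ereal t < conv_radius b" and c: "0 < c"
    and le: "c * pser b s \<le> NN b s"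
  shows "c * pser b t < NN b t"
proof -
  have "ereal s < ereal t" using st by simp
  then have ts: "ereal s < conv_radius b" using st(3) by (rule order_less_trans)
  define a where "a x n = (c - real n) * b n * x powr (real n - c)" for x n
  have St: "a t sums (t powr (-c) * (c * pser b t - NN b t))"
    unfolding a_def using a_sums[of t b c] st by simp
  have Ss: "a s sums (s powr (-c) * (c * pser b s - NN b s))"
    unfolding a_def using a_sums[of s b c] st ts by simp
  have bn: "0 \<le> b n" for n using K unfolding in_K_def by simp
  have a_alt: "a x n = b n * ((c - real n) * x powr (real n - c))" for x n
    unfolding a_def by simp
  have mono: "a t n \<le> a s n" for n
  proof (cases "real n \<le> c")
    case True
    have "t powr (real n - c) \<le> s powr (real n - c)" using True st by (intro powr_mono2') auto
    then show ?thesis unfolding a_alt using True bn[of n]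
      by (intro mult_left_mono) auto
  next
    case False
    have "s powr (real n - c) \<le> t powr (real n - c)" using False st by (intro powr_mono2) auto
    then have "(c - real n) * t powr (real n - c) \<le> (c - real n) * s powr (real n - c)"
      using False by (intro mult_left_mono_neg) auto
    then show ?thesis unfolding a_alt using bn[of n]
      by (rule mult_left_mono)
  qed
  have strict: "a t 0 < a s 0"
  proof -
    have "t powr (- c) < s powr (-c)" using st c by (intro powr_less_mono2_neg) auto
    then show ?thesis unfolding a_def using K c unfolding in_K_def by simp
  qed
  have "suminf (a t) < suminf (a s)"
  proof -
    have "suminf (a t) = a t 0 + (\<Sum>n. a t (Suc n))"
      using suminf_split_head[OF sums_summable[OF St]] by simp
    also have "\<dots> < a s 0 + (\<Sum>n. a s (Suc n))"
    proof -
      have "(\<Sum>n. a t (Suc n)) \<le> (\<Sum>n. a s (Suc n))"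
        using mono sums_summable[OF St] sums_summable[OF Ss]
        by (intro suminf_le) (auto simp: summable_Suc_iff)
      then show ?thesis using strict by simp
    qed
    also have "\<dots> = suminf (a s)"
      using suminf_split_head[OF sums_summable[OF Ss]] by simp
    finally show ?thesis .
  qed
  also have "suminf (a s) \<le> 0"
  proof -
    have "s powr (-c) * (c * pser b s - NN b s) \<le> 0" using le st by (intro mult_nonneg_nonpos) auto
    then show ?thesis using sums_unique[OF Ss] by simp
  qed
  finally have "t powr (-c) * (c * pser b t - NN b t) < 0" using sums_unique[OF St] by simp
  then have "c * pser b t - NN b t < 0" using st by (simp add: mult_less_0_iff)
  then show ?thesis by simp
qed

lemma h_deriv:
  assumes K: "in_K b" and x: "0 \<le> x" "ereal x < conv_radius b"
  shows "((\<lambda>t. t / pser b t) has_field_derivative (pser b x - NN b x) / (pser b x * pser b x)) (at x)"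
proof -
  have ax: "ereal \<bar>x\<bar> < conv_radius b" using x by simp
  have p: "pser b x \<noteq> 0" using pser_pos[OF K x] by simp
  have "((\<lambda>t. t / pser b t) has_field_derivative (1 * pser b x - x * (\<Sum>n. diffs b n * x ^ n)) / (pser b x * pser b x)) (at x)"
    by (rule DERIV_divide[OF DERIV_ident pser_deriv[OF ax] p])
  then show ?thesis using NN_eq(2)[OF ax] by simp
qed

lemma h_cont:
  assumes K: "in_K b" and ab: "0 \<le> a" "ereal c < conv_radius b"
  shows "continuous_on {a..c} (\<lambda>t. t / pser b t)"
proof (rule continuous_at_imp_continuous_on, intro ballI)
  fix x assume "x \<in> {a..c}"
  then have x: "0 \<le> x" "ereal x \<le> ereal c" using ab by auto
  from x(2) ab(2) have "ereal x < conv_radius b" by (rule order.strict_trans1)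
  with x(1) have "0 \<le> x" "ereal x < conv_radius b" by auto
  then show "isCont (\<lambda>t. t / pser b t) x" using h_deriv[OF K] by (meson DERIV_isCont)
qed

lemma h_incr:
  assumes K: "in_K b" and ab: "0 \<le> a" "a < c" "ereal c < conv_radius b"
    and pos: "\<And>x. a < x \<Longrightarrow> x < c \<Longrightarrow> NN b x < pser b x"
  shows "a / pser b a < c / pser b c"
proof (rule DERIV_pos_imp_increasing_open[OF ab(2) _ h_cont[OF K ab(1,3)]])
  fix x assume x: "a < x" "x < c"
  have "ereal x < ereal c" using x by simp
  then have xr: "ereal x < conv_radius b" using ab(3) by (rule order_less_trans)
  have "0 < pser b x" using pser_pos[OF K _ xr] x ab by simp
  then show "\<exists>y. ((\<lambda>t. t / pser b t) has_real_derivative y) (at x) \<and> 0 < y"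
    using h_deriv[OF K _ xr] pos[OF x] x ab
    by (intro exI[of _ "(pser b x - NN b x) / (pser b x * pser b x)"] conjI) auto
qed

lemma h_decr:
  assumes K: "in_K b" and ab: "0 \<le> a" "a < c" "ereal c < conv_radius b"
    and neg: "\<And>x. a < x \<Longrightarrow> x < c \<Longrightarrow> pser b x < NN b x"
  shows "c / pser b c < a / pser b a"
proof (rule DERIV_neg_imp_decreasing_open[OF ab(2) _ h_cont[OF K ab(1,3)]])
  fix x assume x: "a < x" "x < c"
  have "ereal x < ereal c" using x by simp
  then have xr: "ereal x < conv_radius b" using ab(3) by (rule order_less_trans)
  have "0 < pser b x" using pser_pos[OF K _ xr] x ab by simp
  then show "\<exists>y. ((\<lambda>t. t / pser b t) has_real_derivative y) (at x) \<and> y < 0"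
    using h_deriv[OF K _ xr] neg[OF x] x ab
    by (intro exI[of _ "(pser b x - NN b x) / (pser b x * pser b x)"] conjI) (auto simp: divide_neg_pos)
qed

lemma ev_up:
  assumes "ereal x < R" "0 < R"
  shows "eventually (\<lambda>t. x < t \<and> ereal t < R) (up_to_radius R)"
proof (cases R)
  case (real r)
  then have "x < r" using assms by simp
  then have "eventually (\<lambda>t. t \<in> {x<..<r}) (at_left r)" by (rule eventually_at_left_real)
  then show ?thesis unfolding up_to_radius_def using real by (auto elim: eventually_mono)
next
  case PInf
  then show ?thesis unfolding up_to_radius_def using eventually_gt_at_top[of x] by simp
next
  case MInf
  then show ?thesis using assms by simp
qed

lemma lt_trans_ereal: "x < y \<Longrightarrow> ereal y < R \<Longrightarrow> ereal x < R"
proof -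
  assume "x < y" "ereal y < R"
  moreover from \<open>x < y\<close> have "ereal x < ereal y" by simp
  ultimately show ?thesis by (metis order_less_trans)
qed

lemma le_trans_ereal: "x \<le> y \<Longrightarrow> ereal y < R \<Longrightarrow> ereal x < R"
  by (metis lt_trans_ereal order_le_less)

lemma part1:
  assumes K: "in_K b" and tau: "0 < \<tau>" "ereal \<tau> < conv_radius b" "kmean b \<tau> = 1"
  shows "strict_mono_on {0..<\<tau>} (\<lambda>t. t / pser b t)
           \<and> (\<forall>s t. \<tau> < s \<and> s < t \<and> ereal t < conv_radius b \<longrightarrow> t / pser b t < s / pser b s)
           \<and> (\<forall>t. 0 \<le> t \<and> ereal t < conv_radius b \<longrightarrow> t / pser b t \<le> \<tau> / pser b \<tau>)"
proof -
  have pt: "0 < pser b \<tau>" using pser_pos[OF K _ tau(2)] tau by simp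
  have eq: "NN b \<tau> = pser b \<tau>" using kmean_eq[OF K _ tau(2)] tau pt by (simp add: field_simps)
  have below: "NN b x < pser b x" if "0 < x" "x < \<tau>" for x
  proof (rule ccontr)
    assume "\<not> ?thesis"
    then have "1 * pser b x \<le> NN b x" by simp
    from key[OF K that tau(2) _ this] have "pser b \<tau> < NN b \<tau>" by simp
    with eq show False by simp
  qed
  have above: "pser b x < NN b x" if "\<tau> < x" "ereal x < conv_radius b" for x
    using key[OF K tau(1) that _, of 1] eq by simp
  have inc: "s / pser b s < t / pser b t" if "0 \<le> s" "s < t" "t \<le> \<tau>" for s t
    using h_incr[OF K that(1,2) le_trans_ereal[OF that(3) tau(2)]] below that by simp
  have dec: "t / pser b t < s / pser b s" if "\<tau> \<le> s" "s < t" "ereal t < conv_radius b" for s t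
  proof (rule h_decr[OF K _ that(2,3)])
    show "0 \<le> s" using that tau(1) by simp
    fix x assume "s < x" "x < t"
    then show "pser b x < NN b x" using above[of x] lt_trans_ereal[OF _ that(3)] that by simp
  qed
  show ?thesis
  proof (intro conjI allI impI)
    show "strict_mono_on {0..<\<tau>} (\<lambda>t. t / pser b t)"
      by (rule strict_mono_onI) (use inc in auto)
  next
    fix s t assume "\<tau> < s \<and> s < t \<and> ereal t < conv_radius b"
    then show "t / pser b t < s / pser b s" using dec by auto
  next
    fix t assume t: "0 \<le> t \<and> ereal t < conv_radius b"
    consider "t < \<tau>" | "t = \<tau>" | "\<tau> < t" by linarith
    then show "t / pser b t \<le> \<tau> / pser b \<tau>"
    proof cases
      case 1 then show ?thesis using inc[of t \<tau>] t by simp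
    next
      case 3 then show ?thesis using dec[of \<tau> t] t by simp
    qed simp
  qed
qed

lemma part2:
  assumes K: "in_K b" and nK: "\<not> in_Kstar b"
  shows "strict_mono_on {t. 0 < t \<and> ereal t < conv_radius b} (\<lambda>t. t / pser b t)"
proof -
  have R0: "0 < conv_radius b" using K unfolding in_K_def by simp
  have below: "NN b x < pser b x" if x: "0 < x" "ereal x < conv_radius b" for x
  proof (rule ccontr)
    assume "\<not> ?thesis"
    then have x0: "1 * pser b x \<le> NN b x" by simp
    obtain t1 where t1: "ereal x < ereal t1" "ereal t1 < conv_radius b"
      using ereal_dense2[OF x(2)] by blast
    have gt1: "1 < kmean b s" if "t1 \<le> s" "ereal s < conv_radius b" for s
    proof -
      have "x < s" using t1(1) that(1) by simp
      from key[OF K x(1) this that(2) _ x0] have "pser b s < NN b s" by simp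
      moreover have "0 < pser b s" using pser_pos[OF K _ that(2)] \<open>x < s\<close> x by simp
      ultimately show ?thesis using kmean_eq[OF K _ that(2)] \<open>x < s\<close> x by simp
    qed
    have mono: "kmean b s \<le> kmean b t" if "t1 \<le> s" "s \<le> t" "ereal t < conv_radius b" for s t
    proof (cases "s = t")
      case False
      then have st: "s < t" using that by simp
      have sR: "ereal s < conv_radius b" using le_trans_ereal[OF that(2,3)] .
      have s0: "0 < s" using t1(1) that(1) x(1) by simp
      have ps: "0 < pser b s" using pser_pos[OF K _ sR] s0 by simp
      have pt: "0 < pser b t" using pser_pos[OF K _ that(3)] s0 st by simp
      have c0: "0 < kmean b s" using gt1[OF that(1) sR] by simp
      have "kmean b s * pser b s \<le> NN b s" using kmean_eq[OF K _ sR] s0 ps by simp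
      from key[OF K s0 st that(3) c0 this] have "kmean b s * pser b t < NN b t" .
      then have "kmean b s < NN b t / pser b t" using pt by (simp add: field_simps)
      then show ?thesis using kmean_eq[OF K _ that(3)] s0 st by simp
    qed simp
    define S where "S = {t. t1 \<le> t \<and> ereal t < conv_radius b}"
    define L where "L = (SUP t\<in>S. ereal (kmean b t))"
    have t1S: "t1 \<in> S" using t1 unfolding S_def by simp
    have L1: "1 < L"
    proof -
      have "ereal (kmean b t1) \<le> L" unfolding L_def using t1S by (rule SUP_upper)
      moreover have "1 < kmean b t1" using gt1[OF _ t1(2)] by simp
      ultimately show ?thesis by (metis ereal_less(2)[symmetric] less_ereal.simps(1) order_less_le_trans one_ereal_def)
    qed
    have lim: "((\<lambda>t. ereal (kmean b t)) \<longlongrightarrow> L) (up_to_radius (conv_radius b))"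
    proof (rule order_tendstoI)
      fix a assume "a < L"
      then obtain t2 where t2: "t2 \<in> S" "a < ereal (kmean b t2)" unfolding L_def by (auto simp: less_SUP_iff)
      have "eventually (\<lambda>t. t2 < t \<and> ereal t < conv_radius b) (up_to_radius (conv_radius b))"
        using t2(1) R0 unfolding S_def by (intro ev_up) auto
      then show "eventually (\<lambda>t. a < ereal (kmean b t)) (up_to_radius (conv_radius b))"
      proof (rule eventually_mono)
        fix t assume t: "t2 < t \<and> ereal t < conv_radius b"
        then have "kmean b t2 \<le> kmean b t" using mono[of t2 t] t2(1) unfolding S_def by simp
        then show "a < ereal (kmean b t)" using t2(2) by (meson ereal_less_eq(3) order_less_le_trans)
      qed
    next
      fix a assume "L < a"
      have "eventually (\<lambda>t. t1 < t \<and> ereal t < conv_radius b) (up_to_radius (conv_radius b))"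
        using t1 R0 by (intro ev_up) auto
      then show "eventually (\<lambda>t. ereal (kmean b t) < a) (up_to_radius (conv_radius b))"
      proof (rule eventually_mono)
        fix t assume t: "t1 < t \<and> ereal t < conv_radius b"
        then have "t \<in> S" unfolding S_def by simp
        then have "ereal (kmean b t) \<le> L" unfolding L_def by (rule SUP_upper)
        then show "ereal (kmean b t) < a" using \<open>L < a\<close> by simp
      qed
    qed
    have "in_Kstar b" unfolding in_Kstar_def using K lim L1 by blast
    with nK show False by simp
  qed
  show ?thesis
  proof (rule strict_mono_onI)
    fix s t assume s: "s \<in> {t. 0 < t \<and> ereal t < conv_radius b}" and t: "t \<in> {t. 0 < t \<and> ereal t < conv_radius b}" and st: "s < t"
    show "s / pser b s < t / pser b t"
    proof (rule h_incr[OF K _ st])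
      show "0 \<le> s" "ereal t < conv_radius b" using s t by auto
      fix x assume "s < x" "x < t"
      then show "NN b x < pser b x" using below[of x] lt_trans_ereal[of x t] s t by simp
    qed
  qed
qed

theorem lemma4p1:
  fixes b :: "nat \<Rightarrow> real"
  assumes K: "in_K b"
  shows "(\<forall>\<tau>. in_Kstar b \<and> 0 < \<tau> \<and> ereal \<tau> < conv_radius b \<and> kmean b \<tau> = 1 \<longrightarrow>
             strict_mono_on {0..<\<tau>} (\<lambda>t. t / pser b t)
           \<and> (\<forall>s t. \<tau> < s \<and> s < t \<and> ereal t < conv_radius b \<longrightarrow> t / pser b t < s / pser b s)
           \<and> (\<forall>t. 0 \<le> t \<and> ereal t < conv_radius b \<longrightarrow> t / pser b t \<le> \<tau> / pser b \<tau>))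
       \<and> (\<not> in_Kstar b \<longrightarrow>
           strict_mono_on {t. 0 < t \<and> ereal t < conv_radius b} (\<lambda>t. t / pser b t))"
  using part1[OF K] part2[OF K] by blast

end
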